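(* For any choice of the almost disjoint family $\mathcal{A}$ and of the enumeration of $X$ in its definition, $\rho^{[0,1]}$ is a partition regular function and $\mathcal{I}_{\rho^{[0,1]}}=\mathrm{conv}$.
   Context: $\mathrm{conv}$ is the ideal on $\mathbb{Q}\cap[0,1]$ of all sets covered by the ranges of finitely many sequences in $\mathbb{Q}\cap[0,1]$ convergent in $[0,1]$. Definition of $\rho^{[0,1]}$: let $\mathcal{A}=\{A_\alpha:\alpha<\mathfrak{c}\}$ be an almost disjoint family on $\omega$ (pairwise distinct infinite subsets of $\omega$ with pairwise finite intersections). Let $X$ be the set of all $x\colon\omega\times\omega\to[0,1]\cap\mathbb{Q}$ such that: (i) for every $p\in[0,1]$ there is an open neighborhood $U$ of $p$ with $x[(\omega\setminus[0,n])\times\omega]\not\subseteq U$ for all $n\in\omega$; (ii) $x$ is injective; (iii) $x[(\omega\setminus[0,n])\times\omega]\notin\mathrm{conv}$ for all $n$. Fix an enumeration $X=\{x_\alpha:\alpha<\mathfrak{c}\}$. Let $\overline{\mathcal{A}}=\{A\setminus K:A\in\mathcal{A},K\in[\omega]^{<\omega}\}$ and $\rho^{[0,1]}\colon\overline{\mathcal{A}}\to[[0,1]\cap\mathbb{Q}]^\omega$, $\rho^{[0,1]}(A_\alpha\setminus K)=x_\alpha[(\omega\setminus[0,\max(A_\alpha\cap K)])\times\omega]$, with the convention $\max\emptyset=0$. Here $[0,m]$ denotes $\{0,1,\dots,m\}$. Partition regular function: $\Lambda,\Omega$ countably infinite, $\mathcal{F}$ a nonempty family of infinite subsets of $\Omega$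 with $F\setminus K\in\mathcal{F}$ for $F\in\mathcal{F}$, $K$ finite; $\rho\colon\mathcal{F}\to[\Lambda]^\omega$ is partition regular if (M) $E\subseteq F\Rightarrow\rho(E)\subseteq\rho(F)$; (R) if $F\in\mathcal{F}$ and $\rho(F)=A\cup B$ then some $E\in\mathcal{F}$ has $\rho(E)\subseteq A$ or $\rho(E)\subseteq B$; (S) for every $E\in\mathcal{F}$ there is $F\in\mathcal{F}$, $F\subseteq E$, such that every $a\in\rho(F)$ satisfies $a\notin\rho(F\setminus K)$ for some finite $K\subseteq\Omega$. $\mathcal{I}_\rho=\{A\subseteq\Lambda:\forall F\in\mathcal{F}\ \rho(F)\not\subseteq A\}$. *)

theory Defs
  imports "HOL-Analysis.Analysis"
begin

definition QI :: "real set" where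
  "QI = {q. q \<in> \<rat> \<and> 0 \<le> q \<and> q \<le> 1}"

definition conv :: "real set set" where
  "conv = {B. B \<subseteq> QI \<and> (\<exists>S. finite S \<and>
      (\<forall>s\<in>S. range s \<subseteq> QI \<and> (\<exists>L\<in>{0..1}. s \<longlonglongrightarrow> L)) \<and>
      B \<subseteq> (\<Union>s\<in>S. range s))}"

definition partition_regular ::
  "'a set \<Rightarrow> 'b set \<Rightarrow> 'b set set \<Rightarrow> ('b set \<Rightarrow> 'a set) \<Rightarrow> bool" where
  "partition_regular Lam Om Fam rho \<longleftrightarrow>
     countable Lam \<and> infinite Lam \<and> countable Om \<and> infinite Om \<and>
     Fam \<noteq> {} \<and>
     (\<forall>F\<in>Fam. F \<subseteq> Om \<and> infinite F) \<and>
     (\<forall>F\<in>Fam. \<forall>K. finite K \<longrightarrow> F - K \<in> Fam) \<and>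
     (\<forall>F\<in>Fam. rho F \<subseteq> Lam \<and> infinite (rho F)) \<and>
     (\<forall>E\<in>Fam. \<forall>F\<in>Fam. E \<subseteq> F \<longrightarrow> rho E \<subseteq> rho F) \<and>
     (\<forall>F\<in>Fam. \<forall>A B. rho F = A \<union> B \<longrightarrow> (\<exists>E\<in>Fam. rho E \<subseteq> A \<or> rho E \<subseteq> B)) \<and>
     (\<forall>E\<in>Fam. \<exists>F\<in>Fam. F \<subseteq> E \<and>
        (\<forall>a\<in>rho F. \<exists>K. finite K \<and> K \<subseteq> Om \<and> a \<notin> rho (F - K)))"

definition ideal_of :: "'a set \<Rightarrow> 'b set set \<Rightarrow> ('b set \<Rightarrow> 'a set) \<Rightarrow> 'a set set" where
  "ideal_of Lam Fam rho = {A. A \<subseteq> Lam \<and> (\<forall>F\<in>Fam. \<not> rho F \<subseteq> A)}"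

definition almost_disjoint_family :: "('i \<Rightarrow> nat set) \<Rightarrow> bool" where
  "almost_disjoint_family A \<longleftrightarrow> inj A \<and> (\<forall>i. infinite (A i)) \<and>
     (\<forall>i j. i \<noteq> j \<longrightarrow> finite (A i \<inter> A j))"

definition tail :: "nat \<Rightarrow> (nat \<times> nat) set" where
  "tail n = {m. n < m} \<times> UNIV"

definition Xset :: "(nat \<times> nat \<Rightarrow> real) set" where
  "Xset = {x. range x \<subseteq> QI \<and>
     (\<forall>p\<in>{0..1}. \<exists>U. open U \<and> p \<in> U \<and> (\<forall>n. \<not> x ` tail n \<subseteq> U)) \<and>
     inj x \<and>
     (\<forall>n. x ` tail n \<notin> conv)}"

definition Abar :: "('i \<Rightarrow> nat set) \<Rightarrow> nat set set" where
  "Abar A = {A i - K | i K. finite K}"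

definition max0 :: "nat set \<Rightarrow> nat" where
  "max0 K = (if K = {} then 0 else Max K)"

text \<open>rho(A_i - K) = x_i[\<omega>\<setminus>[0, max(A_i \<inter> K)] \<times> \<omega>]; well defined for an
  almost disjoint family (the value does not depend on the chosen representation).\<close>
definition rho01 :: "('i \<Rightarrow> nat set) \<Rightarrow> ('i \<Rightarrow> nat \<times> nat \<Rightarrow> real) \<Rightarrow> nat set \<Rightarrow> real set" where
  "rho01 A x E = (let (i, K) = (SOME (i, K). finite K \<and> E = A i - K)
                  in x i ` tail (max0 (A i \<inter> K)))"

end

theory Submission
  imports Defs "HOL-Library.Nat_Bijection"
begin


lemma QI_01: "QI \<subseteq> {0..1}" unfolding QI_def by auto

lemma countable_QI_sub: "B \<subseteq> QI \<Longrightarrow> countable B"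
  by (rule countable_subset[OF _ countable_rat]) (auto simp: QI_def)

lemma conv_subset: "B \<in> conv \<Longrightarrow> C \<subseteq> B \<Longrightarrow> C \<in> conv"
  unfolding conv_def mem_Collect_eq by (meson order_trans)

lemma conv_Un: "B \<in> conv \<Longrightarrow> C \<in> conv \<Longrightarrow> B \<union> C \<in> conv"
proof -
  assume "B \<in> conv" "C \<in> conv"
  then obtain S1 S2 where h: "finite S1" "\<forall>s\<in>S1. range s \<subseteq> QI \<and> (\<exists>L\<in>{0..1}. s \<longlonglongrightarrow> L)"
    "B \<subseteq> (\<Union>s\<in>S1. range s)" "finite S2" "\<forall>s\<in>S2. range s \<subseteq> QI \<and> (\<exists>L\<in>{0..1}. s \<longlonglongrightarrow> L)"
    "C \<subseteq> (\<Union>s\<in>S2. range s)" "B \<subseteq> QI" "C \<subseteq> QI" unfolding conv_def by blast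
  have "B \<union> C \<subseteq> QI" using h by blast
  moreover have "finite (S1 \<union> S2)" using h by blast
  moreover have "\<forall>s\<in>S1 \<union> S2. range s \<subseteq> QI \<and> (\<exists>L\<in>{0..1}. s \<longlonglongrightarrow> L)" using h(2,5) by blast
  moreover have "B \<union> C \<subseteq> (\<Union>s\<in>S1 \<union> S2. range s)" using h(3,6) by blast
  ultimately show ?thesis unfolding conv_def mem_Collect_eq
    by (intro conjI exI[of _ "S1 \<union> S2"]) simp_all
qed

lemma conv_empty: "{} \<in> conv"
  unfolding conv_def by (intro CollectI conjI exI[of _ "{}"]) auto

lemma conv_UN: "finite P \<Longrightarrow> (\<forall>p\<in>P. f p \<in> conv) \<Longrightarrow> (\<Union>p\<in>P. f p) \<in> conv"
  by (induction P rule: finite_induct) (auto intro: conv_Un conv_empty)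

lemma conv_seq: "range s \<subseteq> QI \<Longrightarrow> s \<longlonglongrightarrow> L \<Longrightarrow> L \<in> {0..1} \<Longrightarrow> range s \<in> conv"
  unfolding conv_def by (intro CollectI conjI exI[of _ "{s}"]) auto

lemma conv_single: "q \<in> QI \<Longrightarrow> {q} \<in> conv"
  using conv_seq[of "\<lambda>_. q" q] QI_01 by auto

lemma conv_finite: "finite B \<Longrightarrow> B \<subseteq> QI \<Longrightarrow> B \<in> conv"
proof -
  assume "finite B" "B \<subseteq> QI"
  then have "(\<Union>q\<in>B. {q}) \<in> conv" by (intro conv_UN) (auto intro: conv_single)
  then show ?thesis by simp
qed

definition conv_to :: "real set \<Rightarrow> real \<Rightarrow> bool" where
  "conv_to T c \<longleftrightarrow> (\<forall>e>0. finite {z\<in>T. dist z c \<ge> e})"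

lemma conv_to_seq:
  assumes "inj e" "range e \<subseteq> T" "conv_to T c"
  shows "e \<longlonglongrightarrow> c"
proof (rule tendstoI)
  fix r :: real assume "r > 0"
  then have "finite {z\<in>T. dist z c \<ge> r}" using assms(3) unfolding conv_to_def by auto
  then have "finite (e -` {z\<in>T. dist z c \<ge> r})" using assms(1) by (intro finite_vimageI) auto
  moreover have "{n. \<not> dist (e n) c < r} \<subseteq> e -` {z\<in>T. dist z c \<ge> r}" using assms(2) by auto
  ultimately have "finite {n. \<not> dist (e n) c < r}" using finite_subset by blast
  then show "\<forall>\<^sub>F n in sequentially. dist (e n) c < r"
    by (simp add: eventually_cofinite[symmetric] cofinite_eq_sequentially)
qed

lemma limpt_range_conv:
  fixes s :: "nat \<Rightarrow> real"
  assumes "c islimpt range s" "s \<longlonglongrightarrow> L"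
  shows "c = L"
proof (rule ccontr)
  assume "c \<noteq> L"
  define r where "r = dist c L / 2"
  have r: "r > 0" using \<open>c \<noteq> L\<close> by (simp add: r_def)
  then obtain N where N: "\<And>n. n \<ge> N \<Longrightarrow> dist (s n) L < r"
    using assms(2) unfolding lim_sequentially by blast
  have "range s \<inter> ball c r \<subseteq> s ` {..<N}"
  proof
    fix z assume "z \<in> range s \<inter> ball c r"
    then obtain n where n: "z = s n" "dist c (s n) < r" by auto
    have "\<not> n \<ge> N"
    proof
      assume "n \<ge> N" then have "dist (s n) L < r" by (rule N)
      with n(2) have "dist c L < 2 * r" using dist_triangle[of c L "s n"] by linarith
      then show False by (simp add: r_def)
    qed
    then show "z \<in> s ` {..<N}" using n by auto
  qed
  then have "finite (range s \<inter> ball c r)" by (rule finite_subset) auto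
  then show False using assms(1) r unfolding islimpt_eq_infinite_ball by blast
qed

lemma conv_limpts_finite:
  assumes "B \<in> conv"
  shows "finite {c. c islimpt B}"
proof -
  obtain S where S: "finite S" "\<forall>s\<in>S. range s \<subseteq> QI \<and> (\<exists>L\<in>{0..1}. s \<longlonglongrightarrow> L)"
    "B \<subseteq> (\<Union>s\<in>S. range s)" using assms unfolding conv_def by blast
  have "{c. c islimpt B} \<subseteq> lim ` S"
  proof
    fix c assume "c \<in> {c. c islimpt B}"
    then have "c islimpt (\<Union>s\<in>S. range s)" using S(3) islimpt_subset by blast
    then obtain s where "s \<in> S" "c islimpt range s" using islimpt_finite_union_iff[OF S(1), of c "\<lambda>s. range s"] by blast
    moreover obtain L where "s \<longlonglongrightarrow> L" using S(2) \<open>s \<in> S\<close> by blast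
    ultimately show "c \<in> lim ` S" using limpt_range_conv limI by blast
  qed
  then show ?thesis using S(1) finite_subset by blast
qed



lemma conv_from_finite_acc:
  assumes S: "S \<subseteq> QI" and P: "finite P" "P \<subseteq> {0..1}"
    and fin: "\<forall>e>0. finite (S - (\<Union>p\<in>P. ball p e))"
  shows "S \<in> conv"
proof (cases "P = {}")
  case True
  have "finite (S - (\<Union>p\<in>P. ball p 1))" using fin by simp
  then have "finite S" using True by simp
  then show ?thesis using S conv_finite by blast
next
  case False
  define Sp where "Sp p = {s\<in>S. \<forall>q\<in>P. dist s p \<le> dist s q}" for p
  have cover: "S \<subseteq> (\<Union>p\<in>P. Sp p)"
  proof
    fix s assume s: "s \<in> S"
    define m where "m = Min ((\<lambda>q. dist s q) ` P)"
    have "m \<in> (\<lambda>q. dist s q) ` P" unfolding m_def using P(1) False by (intro Min_in) auto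
    then obtain p where p: "p \<in> P" "dist s p = m" by auto
    have "\<forall>q\<in>P. dist s p \<le> dist s q" using p P(1) unfolding m_def by auto
    then show "s \<in> (\<Union>p\<in>P. Sp p)" using p s unfolding Sp_def by auto
  qed
  have "Sp p \<in> conv" if p: "p \<in> P" for p
  proof (cases "finite (Sp p)")
    case True
    then show ?thesis using S conv_finite unfolding Sp_def by auto
  next
    case False
    have cnt: "countable (Sp p)" using S countable_QI_sub unfolding Sp_def by auto
    define e where "e = from_nat_into (Sp p)"
    have bij: "bij_betw e UNIV (Sp p)" unfolding e_def using bij_betw_from_nat_into[OF cnt False] .
    have ct: "conv_to (Sp p) p" unfolding conv_to_def
    proof (intro allI impI)
      fix r :: real assume "r > 0"
      have "{z\<in>Sp p. dist z p \<ge> r} \<subseteq> S - (\<Union>p\<in>P. ball p r)"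
      proof
        fix z assume z: "z \<in> {z\<in>Sp p. dist z p \<ge> r}"
        have "z \<notin> ball q r" if "q \<in> P" for q
        proof
          assume "z \<in> ball q r"
          then have "dist z q < r" by (simp add: dist_commute)
          moreover have "dist z p \<le> dist z q" using z that unfolding Sp_def by blast
          ultimately show False using z by simp
        qed
        then show "z \<in> S - (\<Union>p\<in>P. ball p r)" using z unfolding Sp_def by auto
      qed
      then show "finite {z\<in>Sp p. dist z p \<ge> r}" using fin \<open>r > 0\<close> finite_subset by blast
    qed
    have "e \<longlonglongrightarrow> p" using conv_to_seq[OF _ _ ct] bij by (auto simp: bij_betw_def)
    moreover have "range e = Sp p" using bij by (auto simp: bij_betw_def)
    moreover have "range e \<subseteq> QI" using calculation(2) S unfolding Sp_def by auto
    ultimately show ?thesis using conv_seq[of e p] P p by auto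
  qed
  then have "(\<Union>p\<in>P. Sp p) \<in> conv" using P by (intro conv_UN) auto
  then show ?thesis using cover conv_subset by blast
qed

lemma acc_infinite:
  assumes S: "S \<subseteq> QI" and nc: "S \<notin> conv"
  shows "infinite {c. c islimpt S}"
proof
  assume finA: "finite {c. c islimpt S}"
  have sub: "{c. c islimpt S} \<subseteq> {0..1}"
  proof
    fix c assume "c \<in> {c. c islimpt S}"
    then have "c islimpt {0..1::real}" using S QI_01 islimpt_subset by blast
    then show "c \<in> {0..1}" using closed_limpt[of "{0..1::real}"] by auto
  qed
  have "\<forall>e>0. finite (S - (\<Union>p\<in>{c. c islimpt S}. ball p e))"
  proof (intro allI impI)
    fix e :: real assume e: "e > 0"
    define T where "T = S - (\<Union>p\<in>{c. c islimpt S}. ball p e)"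
    show "finite T"
    proof (rule ccontr)
      assume "infinite T"
      moreover have "T \<subseteq> {0..1}" using S QI_01 unfolding T_def by auto
      ultimately obtain q where q: "q islimpt T"
        using Heine_Borel_imp_Bolzano_Weierstrass[of "{0..1::real}" T] by auto
      then have "q islimpt S" using islimpt_subset unfolding T_def by blast
      then have "T \<inter> ball q e = {}" unfolding T_def by auto
      moreover have "infinite (T \<inter> ball q e)" using q e unfolding islimpt_eq_infinite_ball by blast
      ultimately show False by simp
    qed
  qed
  then have "S \<in> conv" using conv_from_finite_acc[OF S finA sub] by blast
  then show False using nc by blast
qed

lemma limpt_set:
  fixes c :: real
  assumes "c islimpt S"
  shows "\<exists>G\<subseteq>S. c islimpt G \<and> conv_to G c"
proof -
  obtain f where f: "\<And>n. f n \<in> S - {c}" "f \<longlonglongrightarrow> c"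
    using assms unfolding islimpt_sequential by blast
  have "c islimpt range f" unfolding islimpt_sequential using f by (intro exI[of _ f]) auto
  moreover have "conv_to (range f) c" unfolding conv_to_def
  proof (intro allI impI)
    fix r :: real assume "r > 0"
    then obtain N where N: "\<And>n. n \<ge> N \<Longrightarrow> dist (f n) c < r"
      using f(2) unfolding lim_sequentially by blast
    have "{z\<in>range f. dist z c \<ge> r} \<subseteq> f ` {..<N}"
    proof
      fix z assume "z \<in> {z\<in>range f. dist z c \<ge> r}"
      then obtain n where n: "z = f n" "dist (f n) c \<ge> r" by auto
      then have "n < N" using N[of n] by (meson not_le)
      then show "z \<in> f ` {..<N}" using n by auto
    qed
    then show "finite {z\<in>range f. dist z c \<ge> r}" using finite_subset by blast
  qed
  moreover have "range f \<subseteq> S" using f by auto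
  ultimately show ?thesis by blast
qed

lemma conv_to_subset: "conv_to G c \<Longrightarrow> H \<subseteq> G \<Longrightarrow> conv_to H c"
proof -
  assume a: "conv_to G c" "H \<subseteq> G"
  show ?thesis unfolding conv_to_def
  proof (intro allI impI)
    fix e :: real assume "e > 0"
    then have "finite {z\<in>G. dist z c \<ge> e}" using a(1) unfolding conv_to_def by blast
    moreover have "{z\<in>H. dist z c \<ge> e} \<subseteq> {z\<in>G. dist z c \<ge> e}" using a(2) by blast
    ultimately show "finite {z\<in>H. dist z c \<ge> e}" by (rule finite_subset[rotated])
  qed
qed

lemma conv_to_inter:
  assumes "conv_to G a" "conv_to H b" "a \<noteq> b"
  shows "finite (G \<inter> H)"
proof -
  define r where "r = dist a b / 2"
  have r: "r > 0" using assms(3) by (simp add: r_def)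
  have "G \<inter> H \<subseteq> {z\<in>G. dist z a \<ge> r} \<union> {z\<in>H. dist z b \<ge> r}"
  proof
    fix z assume z: "z \<in> G \<inter> H"
    have "\<not> (dist z a < r \<and> dist z b < r)"
    proof
      assume "dist z a < r \<and> dist z b < r"
      then have "dist a b < 2 * r" using dist_triangle[of a b z] by (simp add: dist_commute)
      then show False by (simp add: r_def)
    qed
    then show "z \<in> {z\<in>G. dist z a \<ge> r} \<union> {z\<in>H. dist z b \<ge> r}" using z by auto
  qed
  moreover have "finite ({z\<in>G. dist z a \<ge> r} \<union> {z\<in>H. dist z b \<ge> r})"
    using assms r unfolding conv_to_def by auto
  ultimately show ?thesis using finite_subset by blast
qed

lemma islimpt_Diff_finite:
  fixes c :: real
  assumes "c islimpt G" "finite F"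
  shows "c islimpt (G - F)"
proof -
  have "c islimpt ((G - F) \<union> (G \<inter> F))" using assms(1) by (rule islimpt_subset) auto
  then show ?thesis using islimpt_finite[of "G \<inter> F" c] assms(2) by (auto simp: islimpt_Un)
qed



lemma build_X:
  fixes c :: "nat \<Rightarrow> real" and D :: "nat \<Rightarrow> real set"
  assumes S: "S \<subseteq> QI" and injc: "inj c"
    and DS: "\<And>k. D k \<subseteq> S" and dD: "\<And>z k j. z \<in> D k \<Longrightarrow> z \<in> D j \<Longrightarrow> k = j"
    and lim: "\<And>k. c k islimpt D k" and ct: "\<And>k. conv_to (D k) (c k)"
  shows "\<exists>y\<in>Xset. range y \<subseteq> S"
proof -
  have cntD: "countable (D k)" for k by (rule countable_QI_sub) (use DS S in blast)
  have infD: "infinite (D k)" for k using lim islimpt_finite by blast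
  define e0 where "e0 = from_nat_into (D 0)"
  define e1 where "e1 = from_nat_into (D 1)"
  have b0: "bij_betw e0 UNIV (D 0)" unfolding e0_def by (rule bij_betw_from_nat_into[OF cntD infD])
  have b1: "bij_betw e1 UNIV (D 1)" unfolding e1_def by (rule bij_betw_from_nat_into[OF cntD infD])
  have e0D: "e0 m \<in> D 0" for m using b0 by (auto simp: bij_betw_def)
  have e1D: "e1 m \<in> D 1" for m using b1 by (auto simp: bij_betw_def)
  have inj0: "inj e0" and inj1: "inj e1" using b0 b1 by (auto simp: bij_betw_def)
  have l0: "e0 \<longlonglongrightarrow> c 0" using conv_to_seq[OF inj0 _ ct] e0D by auto
  have l1: "e1 \<longlonglongrightarrow> c 1" using conv_to_seq[OF inj1 _ ct] e1D by auto
  define I where "I m = {k. fst (prod_decode k) = m}" for m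
  define R where "R m = {e0 m, e1 m} \<union> (\<Union>k\<in>I m. D (k+2))" for m
  have RS: "R m \<subseteq> S" for m unfolding R_def using e0D e1D DS by blast
  have DR: "k \<in> I m \<Longrightarrow> D (k+2) \<subseteq> R m" for k m unfolding R_def by blast
  have encI: "prod_encode (m, j) \<in> I m" for m j unfolding I_def by simp
  have infR: "infinite (R m)" for m
  proof
    assume "finite (R m)"
    then have "finite (D (prod_encode (m, 0) + 2))" by (rule finite_subset[OF DR[OF encI]])
    then show False using infD by blast
  qed
  have cntR: "countable (R m)" for m by (rule countable_QI_sub) (use RS S in blast)
  have bR: "bij_betw (from_nat_into (R m)) UNIV (R m)" for m
    by (rule bij_betw_from_nat_into[OF cntR infR])
  have disjR: "m = m'" if z: "z \<in> R m" "z \<in> R m'" for z m m'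
  proof -
    have cases: "z = e0 m \<or> z = e1 m \<or> (\<exists>k. fst (prod_decode k) = m \<and> z \<in> D (k+2))"
      if "z \<in> R m" for m using that unfolding R_def I_def by auto
    define lab where "lab m = (if z = e0 m then 0 else if z = e1 m then 1 else
       (SOME j. j \<ge> 2 \<and> fst (prod_decode (j - 2)) = m \<and> z \<in> D j))" for m
    have lab: "z \<in> D (lab m) \<and> (lab m = 0 \<longrightarrow> z = e0 m) \<and> (lab m = 1 \<longrightarrow> z = e1 m)
       \<and> (lab m \<ge> 2 \<longrightarrow> fst (prod_decode (lab m - 2)) = m)" if zm: "z \<in> R m" for m
    proof (cases "z = e0 m")
      case True then show ?thesis using e0D unfolding lab_def by simp
    next
      case nA: False
      show ?thesis
      proof (cases "z = e1 m")
        case True then show ?thesis using e1D nA unfolding lab_def by simp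
      next
        case nB: False
        then obtain k where k: "fst (prod_decode k) = m" "z \<in> D (k+2)" using cases[OF zm] nA by blast
        have ex: "\<exists>j. j \<ge> 2 \<and> fst (prod_decode (j - 2)) = m \<and> z \<in> D j"
          using k by (intro exI[of _ "k+2"]) simp
        have "lab m = (SOME j. j \<ge> 2 \<and> fst (prod_decode (j - 2)) = m \<and> z \<in> D j)"
          unfolding lab_def using nA nB by simp
        then have "lab m \<ge> 2 \<and> fst (prod_decode (lab m - 2)) = m \<and> z \<in> D (lab m)"
          using someI_ex[OF ex] by simp
        then show ?thesis by simp
      qed
    qed
    have L1: "z \<in> D (lab m) \<and> (lab m = 0 \<longrightarrow> z = e0 m) \<and> (lab m = 1 \<longrightarrow> z = e1 m)
       \<and> (lab m \<ge> 2 \<longrightarrow> fst (prod_decode (lab m - 2)) = m)" by (rule lab[OF z(1)])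
    have L2: "z \<in> D (lab m') \<and> (lab m' = 0 \<longrightarrow> z = e0 m') \<and> (lab m' = 1 \<longrightarrow> z = e1 m')
       \<and> (lab m' \<ge> 2 \<longrightarrow> fst (prod_decode (lab m' - 2)) = m')" by (rule lab[OF z(2)])
    have eq: "lab m = lab m'" by (rule dD[OF conjunct1[OF L1] conjunct1[OF L2]])
    have h0: "m = m'" if c: "lab m = 0"
    proof -
      have c': "lab m' = 0" using c eq by simp
      have a: "z = e0 m" using L1 c by blast
      have b: "z = e0 m'" using L2 c' by blast
      show ?thesis by (rule injD[OF inj0]) (use a b in simp)
    qed
    have h1: "m = m'" if c: "lab m = 1"
    proof -
      have c': "lab m' = 1" using c eq by simp
      have a: "z = e1 m" using L1 c by blast
      have b: "z = e1 m'" using L2 c' by blast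
      show ?thesis by (rule injD[OF inj1]) (use a b in simp)
    qed
    have h2: "m = m'" if c: "lab m \<ge> 2"
    proof -
      have c': "lab m' \<ge> 2" using c eq by simp
      have a: "fst (prod_decode (lab m - 2)) = m" using L1 c by blast
      have b: "fst (prod_decode (lab m' - 2)) = m'" using L2 c' by blast
      show ?thesis using a b eq by metis
    qed
    have "lab m = 0 \<or> lab m = 1 \<or> lab m \<ge> 2" by linarith
    then show ?thesis using h0 h1 h2 by blast
  qed
  define y where "y = (\<lambda>(m, n). from_nat_into (R m) n)"
  have yR: "y (m, n) \<in> R m" for m n using bR unfolding y_def by (auto simp: bij_betw_def)
  have rng: "range y \<subseteq> S" using yR RS by auto
  have injy: "inj y"
  proof (rule injI)
    fix a b assume ab: "y a = y b"
    obtain m n where a: "a = (m, n)" by (metis surj_pair)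
    obtain m' n' where b: "b = (m', n')" by (metis surj_pair)
    have 1: "y a \<in> R m" using yR a by simp
    have 2: "y a \<in> R m'" using yR b ab by simp
    have mm: "m = m'" by (rule disjR[OF 1 2])
    then have "from_nat_into (R m) n = from_nat_into (R m) n'" using ab a b unfolding y_def by simp
    moreover have "inj (from_nat_into (R m))" using bR[of m] by (simp add: bij_betw_def)
    ultimately have "n = n'" by (simp add: inj_eq)
    then show "a = b" using a b mm by simp
  qed
  have Rtail: "R (Suc n) \<subseteq> y ` tail n" for n
  proof
    fix z assume "z \<in> R (Suc n)"
    then obtain j where "z = from_nat_into (R (Suc n)) j" using bR[of "Suc n"]
      by (auto simp: bij_betw_def)
    then have "z = y (Suc n, j)" unfolding y_def by simp
    moreover have "(Suc n, j) \<in> tail n" unfolding tail_def by simp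
    ultimately show "z \<in> y ` tail n" by blast
  qed
  have nc: "y ` tail n \<notin> conv" for n
  proof
    assume "y ` tail n \<in> conv"
    then have fin: "finite {a. a islimpt y ` tail n}" by (rule conv_limpts_finite)
    have sub: "(\<lambda>k. c (k+2)) ` I (Suc n) \<subseteq> {a. a islimpt y ` tail n}"
    proof
      fix a assume "a \<in> (\<lambda>k. c (k+2)) ` I (Suc n)"
      then obtain k where k: "k \<in> I (Suc n)" "a = c (k+2)" by blast
      have "D (k+2) \<subseteq> y ` tail n" using DR[OF k(1)] Rtail[of n] by (rule order_trans)
      then have "c (k+2) islimpt y ` tail n" by (rule islimpt_subset[OF lim])
      then show "a \<in> {a. a islimpt y ` tail n}" using k(2) by simp
    qed
    have inf: "infinite ((\<lambda>k. c (k+2)) ` I (Suc n))"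
    proof
      assume fi: "finite ((\<lambda>k. c (k+2)) ` I (Suc n))"
      have ij: "inj (\<lambda>k. c (k+2))"
      proof (rule injI)
        fix u v assume "c (u+2) = c (v+2)"
        then have "u + 2 = v + 2" using injc by (simp add: inj_eq)
        then show "u = v" by simp
      qed
      have fI: "finite (I (Suc n))" by (rule finite_imageD[OF fi inj_on_subset[OF ij subset_UNIV]])
      have ij2: "inj (\<lambda>j. prod_encode (Suc n, j))" by (simp add: inj_def prod_encode_eq)
      have "range (\<lambda>j. prod_encode (Suc n, j)) \<subseteq> I (Suc n)" using encI by auto
      then have "finite (range (\<lambda>j. prod_encode (Suc n, j)))" using fI by (rule finite_subset)
      then have "finite (UNIV :: nat set)" by (rule finite_imageD[OF _ ij2])
      then show False by simp
    qed
    show False using inf finite_subset[OF sub fin] by blast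
  qed
  have c01: "c 0 \<noteq> c 1" using injc by (auto dest: injD)
  have spread: "\<exists>U. open U \<and> p \<in> U \<and> (\<forall>n. \<not> y ` tail n \<subseteq> U)" for p :: real
  proof -
    define r where "r = dist (c 0) (c 1) / 3"
    have r: "r > 0" using c01 by (simp add: r_def)
    have "\<not> y ` tail n \<subseteq> ball p r" for n
    proof
      assume sub: "y ` tail n \<subseteq> ball p r"
      have "e0 m \<in> ball p r \<and> e1 m \<in> ball p r" if "m \<ge> Suc n" for m
      proof -
        have "R m \<subseteq> y ` tail n"
        proof
          fix z assume "z \<in> R m"
          then obtain j where "z = from_nat_into (R m) j" using bR[of m] by (auto simp: bij_betw_def)
          then have "z = y (m, j)" unfolding y_def by simp
          moreover have "(m, j) \<in> tail n" unfolding tail_def using that by simp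
          ultimately show "z \<in> y ` tail n" by blast
        qed
        moreover have "e0 m \<in> R m" "e1 m \<in> R m" unfolding R_def by auto
        ultimately have "e0 m \<in> ball p r" "e1 m \<in> ball p r" using sub by (meson subsetD)+
        then show ?thesis by blast
      qed
      then have d0: "\<forall>m\<ge>Suc n. dist p (e0 m) \<le> r" and d1: "\<forall>m\<ge>Suc n. dist p (e1 m) \<le> r"
        by (simp_all add: less_imp_le)
      have "dist p (c 0) \<le> r"
        by (rule LIMSEQ_le_const2[OF tendsto_dist[OF tendsto_const l0]]) (use d0 in blast)
      moreover have "dist p (c 1) \<le> r"
        by (rule LIMSEQ_le_const2[OF tendsto_dist[OF tendsto_const l1]]) (use d1 in blast)
      ultimately have "dist (c 0) (c 1) \<le> 2 * r" using dist_triangle[of "c 0" "c 1" p]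
        by (simp add: dist_commute)
      then show False using r by (simp add: r_def)
    qed
    then show ?thesis using r by (intro exI[of _ "ball p r"]) auto
  qed
  have "range y \<subseteq> QI" using rng S by (rule order_trans)
  then have "y \<in> Xset" unfolding Xset_def using injy nc spread by simp
  then show ?thesis using rng by blast
qed



lemma key:
  assumes S: "S \<subseteq> QI" and nc: "S \<notin> conv"
  shows "\<exists>y\<in>Xset. range y \<subseteq> S"
proof -
  have "infinite {c. c islimpt S}" by (rule acc_infinite[OF S nc])
  then have "\<exists>f::nat \<Rightarrow> real. inj f \<and> range f \<subseteq> {c. c islimpt S}"
    by (simp only: infinite_iff_countable_subset)
  then obtain c :: "nat \<Rightarrow> real" where c: "inj c" "range c \<subseteq> {c. c islimpt S}"
    by (elim exE conjE)
  have "\<forall>k. \<exists>G. G \<subseteq> S \<and> c k islimpt G \<and> conv_to G (c k)"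
  proof
    fix k
    have "c k islimpt S" using c(2) by auto
    then have "\<exists>G\<subseteq>S. c k islimpt G \<and> conv_to G (c k)" by (rule limpt_set)
    then show "\<exists>G. G \<subseteq> S \<and> c k islimpt G \<and> conv_to G (c k)" by (simp only: subset_iff_psubset_eq ex_simps Bex_def)
  qed
  from choice[OF this] obtain G where G: "\<forall>k. G k \<subseteq> S \<and> c k islimpt G k \<and> conv_to (G k) (c k)"
    by (elim exE)
  then have G: "G k \<subseteq> S \<and> c k islimpt G k \<and> conv_to (G k) (c k)" for k by (rule spec)
  define D where "D k = G k - (\<Union>j<k. G j)" for k
  have DS: "D k \<subseteq> S" for k unfolding D_def using G[of k] by auto
  have dD: "k = j" if "z \<in> D k" "z \<in> D j" for z k j
  proof (rule ccontr)
    assume "k \<noteq> j"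
    then consider "k < j" | "j < k" by linarith
    then show False
    proof cases
      case 1
      have "z \<in> G k" using that(1) unfolding D_def by simp
      moreover have "z \<notin> (\<Union>j'<j. G j')" using that(2) unfolding D_def by simp
      ultimately show False using 1 by auto
    next
      case 2
      have "z \<in> G j" using that(2) unfolding D_def by simp
      moreover have "z \<notin> (\<Union>j'<k. G j')" using that(1) unfolding D_def by simp
      ultimately show False using 2 by auto
    qed
  qed
  have lim: "c k islimpt D k" for k
  proof -
    have fin: "finite (G k \<inter> G j)" if "j < k" for j
    proof -
      have "c k \<noteq> c j" using c(1) that by (auto simp: inj_eq)
      then show ?thesis using conv_to_inter[of "G k" "c k" "G j" "c j"] G[of k] G[of j] by simp
    qed
    have "finite (\<Union>j<k. G k \<inter> G j)" using fin by (intro finite_UN_I) auto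
    moreover have "D k = G k - (\<Union>j<k. G k \<inter> G j)" unfolding D_def by auto
    moreover have "c k islimpt G k" using G[of k] by simp
    ultimately show ?thesis using islimpt_Diff_finite[of "c k" "G k"] by simp
  qed
  have ct: "conv_to (D k) (c k)" for k
    by (rule conv_to_subset[of "G k"]) (use G[of k] in \<open>auto simp: D_def\<close>)
  show ?thesis by (rule build_X[OF S c(1) DS dD lim ct])
qed

lemma AD_eq:
  assumes "almost_disjoint_family A" "finite K" "A i - K \<subseteq> A j - K'"
  shows "i = j"
proof (rule ccontr)
  assume "i \<noteq> j"
  then have "finite (A i \<inter> A j)" using assms(1) unfolding almost_disjoint_family_def by blast
  moreover have "A i \<subseteq> (A i \<inter> A j) \<union> K" using assms(3) by blast
  ultimately have "finite (A i)" using assms(2) finite_subset by blast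
  then show False using assms(1) unfolding almost_disjoint_family_def by blast
qed

lemma rho_eq:
  assumes ad: "almost_disjoint_family A" and K: "finite K"
  shows "rho01 A x (A i - K) = x i ` tail (max0 (A i \<inter> K))"
proof -
  define p where "p = (SOME (j, K'). finite K' \<and> A i - K = A j - K')"
  have "(\<lambda>(j, K'). finite K' \<and> A i - K = A j - K') p"
    unfolding p_def by (rule someI[of "\<lambda>(j, K'). finite K' \<and> A i - K = A j - K'" "(i, K)"]) (simp add: K)
  moreover obtain j K' where pj: "p = (j, K')" by (metis surj_pair)
  ultimately have h: "finite K'" "A i - K = A j - K'" by auto
  have ij: "i = j" using AD_eq[OF ad K] h(2) by blast
  have eq: "A i \<inter> K' = A i \<inter> K" using h(2) ij by blast
  have "rho01 A x (A i - K) = x j ` tail (max0 (A j \<inter> K'))"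
    unfolding rho01_def p_def[symmetric] pj by simp
  then show ?thesis using ij eq by simp
qed

lemma max0_mono: "finite K2 \<Longrightarrow> K1 \<subseteq> K2 \<Longrightarrow> max0 K1 \<le> max0 K2"
  unfolding max0_def by (auto intro: Max_mono)

lemma tail_anti: "n \<le> n' \<Longrightarrow> tail n' \<subseteq> tail n"
  unfolding tail_def by auto

lemma tail_infinite: "infinite (tail n)"
proof
  assume "finite (tail n)"
  moreover have "range (\<lambda>k. (Suc n, k)) \<subseteq> tail n" unfolding tail_def by auto
  ultimately have "finite (range (\<lambda>k::nat. (Suc n, k)))" using finite_subset by blast
  moreover have "inj (\<lambda>k::nat. (Suc n, k))" by (simp add: inj_def)
  ultimately have "finite (UNIV :: nat set)" using finite_imageD by blast
  then show False by simp
qed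



theorem proposition6p4:
  fixes A :: "real \<Rightarrow> nat set" and x :: "real \<Rightarrow> nat \<times> nat \<Rightarrow> real"
  assumes "almost_disjoint_family A"
    and "bij_betw x UNIV Xset"
  shows "partition_regular QI (UNIV :: nat set) (Abar A) (rho01 A x) \<and>
         ideal_of QI (Abar A) (rho01 A x) = conv"
proof -
  note ad = assms(1)
  have xX: "x i \<in> Xset" for i using assms(2) by (auto simp: bij_betw_def)
  have surjX: "\<exists>j. x j = y" if "y \<in> Xset" for y
  proof -
    have "y \<in> x ` UNIV" using assms(2) that by (simp add: bij_betw_def)
    then show ?thesis by (metis imageE)
  qed
  have xQI: "range (x i) \<subseteq> QI" for i using xX[of i] unfolding Xset_def by simp
  have xinj: "inj (x i)" for i using xX[of i] unfolding Xset_def by simp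
  have xnc: "x i ` tail n \<notin> conv" for i n using xX[of i] unfolding Xset_def by simp
  have infA: "infinite (A i)" for i using ad unfolding almost_disjoint_family_def by simp
  have AbarE: "\<exists>i K. F = A i - K \<and> finite K" if FA: "F \<in> Abar A" for F
    using that unfolding Abar_def by blast
  have AbarI: "A i - K \<in> Abar A" if "finite K" for i K
    using that unfolding Abar_def by blast
  have rhoF: "\<exists>i n. rho01 A x F = x i ` tail n" if FA: "F \<in> Abar A" for F
  proof -
    obtain i K where F: "F = A i - K" "finite K" using AbarE[OF FA] by blast
    show ?thesis using rho_eq[OF ad F(2), of x i] F(1) by blast
  qed
  have rho_nc: "rho01 A x F \<notin> conv" if FA: "F \<in> Abar A" for F
    using rhoF[OF FA] xnc by metis
  have rho_QI: "rho01 A x F \<subseteq> QI" if FA: "F \<in> Abar A" for F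
  proof -
    obtain i n where "rho01 A x F = x i ` tail n" using rhoF[OF FA] by blast
    then show ?thesis using xQI[of i] by auto
  qed
  have rho_inf: "infinite (rho01 A x F)" if FA: "F \<in> Abar A" for F
  proof -
    obtain i n where e: "rho01 A x F = x i ` tail n" using rhoF[OF FA] by blast
    have "inj_on (x i) (tail n)" using xinj[of i] by (rule inj_on_subset) simp
    then have "infinite (x i ` tail n)" using tail_infinite[of n] finite_imageD by blast
    then show ?thesis using e by simp
  qed
  have keyF: "\<exists>E\<in>Abar A. rho01 A x E \<subseteq> B" if B: "B \<subseteq> QI" "B \<notin> conv" for B
  proof -
    obtain y where y: "y \<in> Xset" "range y \<subseteq> B" using key[OF B] by blast
    obtain j where j: "x j = y" using surjX[OF y(1)] by blast
    have "A j - {} \<in> Abar A" by (rule AbarI) simp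
    moreover have "rho01 A x (A j - {}) = x j ` tail (max0 (A j \<inter> {}))"
      by (rule rho_eq[OF ad]) simp
    then have "rho01 A x (A j - {}) \<subseteq> B" using y(2) j by auto
    ultimately show ?thesis by blast
  qed
  have QIc: "countable QI" by (rule countable_QI_sub) simp
  have QIi: "infinite QI"
  proof
    assume fin: "finite QI"
    have "range (\<lambda>n::nat. 1 / real (Suc n)) \<subseteq> QI"
    proof
      fix z assume "z \<in> range (\<lambda>n::nat. 1 / real (Suc n))"
      then obtain n where z: "z = 1 / real (Suc n)" by blast
      have "z \<in> \<rat>" unfolding z by (intro Rats_divide Rats_1 Rats_of_nat)
      moreover have "0 \<le> z" "z \<le> 1" unfolding z by (auto simp: field_simps)
      ultimately show "z \<in> QI" unfolding QI_def by simp
    qed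
    then have "finite (range (\<lambda>n::nat. 1 / real (Suc n)))" using fin by (rule finite_subset)
    moreover have "inj (\<lambda>n::nat. 1 / real (Suc n))" by (rule injI) simp
    ultimately have "finite (UNIV :: nat set)" by (rule finite_imageD)
    then show False by simp
  qed
  have ne: "Abar A \<noteq> {}" using AbarI[of "{}" 0] by auto
  have fam: "\<forall>F\<in>Abar A. F \<subseteq> UNIV \<and> infinite F"
  proof
    fix F assume "F \<in> Abar A"
    then obtain i K where F: "F = A i - K" "finite K" using AbarE by blast
    then have "infinite F" using infA[of i] by (metis Diff_infinite_finite)
    then show "F \<subseteq> UNIV \<and> infinite F" by simp
  qed
  have diff: "\<forall>F\<in>Abar A. \<forall>K. finite K \<longrightarrow> F - K \<in> Abar A"
  proof (intro ballI allI impI)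
    fix F K assume "F \<in> Abar A" "finite (K :: nat set)"
    then obtain i K0 where F: "F = A i - K0" "finite K0" using AbarE by blast
    have "F - K = A i - (K0 \<union> K)" using F by auto
    moreover have "finite (K0 \<union> K)" using F \<open>finite K\<close> by simp
    ultimately show "F - K \<in> Abar A" using AbarI by simp
  qed
  have rng: "\<forall>F\<in>Abar A. rho01 A x F \<subseteq> QI \<and> infinite (rho01 A x F)"
    using rho_QI rho_inf by blast
  have mono: "\<forall>E\<in>Abar A. \<forall>F\<in>Abar A. E \<subseteq> F \<longrightarrow> rho01 A x E \<subseteq> rho01 A x F"
  proof (intro ballI impI)
    fix E F assume E: "E \<in> Abar A" and F: "F \<in> Abar A" and EF: "E \<subseteq> F"
    obtain i K where Ei: "E = A i - K" "finite K" using AbarE[OF E] by blast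
    obtain j K' where Fj: "F = A j - K'" "finite K'" using AbarE[OF F] by blast
    have ij: "i = j" using AD_eq[OF ad Ei(2)] EF Ei(1) Fj(1) by blast
    have sub: "A i \<inter> K' \<subseteq> A i \<inter> K" using EF Ei(1) Fj(1) ij by blast
    have "max0 (A i \<inter> K') \<le> max0 (A i \<inter> K)" using sub Ei(2) by (intro max0_mono) auto
    then have "tail (max0 (A i \<inter> K)) \<subseteq> tail (max0 (A i \<inter> K'))" by (rule tail_anti)
    then show "rho01 A x E \<subseteq> rho01 A x F"
      unfolding Ei(1) Fj(1) rho_eq[OF ad Ei(2)] rho_eq[OF ad Fj(2)] ij[symmetric] by (rule image_mono)
  qed
  have R: "\<forall>F\<in>Abar A. \<forall>A' B'. rho01 A x F = A' \<union> B' \<longrightarrow> (\<exists>E\<in>Abar A. rho01 A x E \<subseteq> A' \<or> rho01 A x E \<subseteq> B')"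
  proof (intro ballI allI impI)
    fix F A' B' assume F: "F \<in> Abar A" and eq: "rho01 A x F = A' \<union> B'"
    have sA: "A' \<subseteq> QI" and sB: "B' \<subseteq> QI" using rho_QI[OF F] eq by auto
    have "A' \<notin> conv \<or> B' \<notin> conv"
    proof (rule ccontr)
      assume "\<not> (A' \<notin> conv \<or> B' \<notin> conv)"
      then have "A' \<union> B' \<in> conv" using conv_Un by blast
      then show False using rho_nc[OF F] eq by simp
    qed
    then show "\<exists>E\<in>Abar A. rho01 A x E \<subseteq> A' \<or> rho01 A x E \<subseteq> B'"
      using keyF sA sB by blast
  qed
  have S: "\<forall>E\<in>Abar A. \<exists>F\<in>Abar A. F \<subseteq> E \<and>
        (\<forall>a\<in>rho01 A x F. \<exists>K. finite K \<and> K \<subseteq> UNIV \<and> a \<notin> rho01 A x (F - K))"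
  proof
    fix E assume E: "E \<in> Abar A"
    obtain i K0 where Ei: "E = A i - K0" "finite K0" using AbarE[OF E] by blast
    have "\<forall>a\<in>rho01 A x E. \<exists>K. finite K \<and> K \<subseteq> UNIV \<and> a \<notin> rho01 A x (E - K)"
    proof
      fix a assume "a \<in> rho01 A x E"
      then have "a \<in> x i ` tail (max0 (A i \<inter> K0))" using rho_eq[OF ad Ei(2)] Ei(1) by simp
      then obtain m k where a: "a = x i (m, k)" by auto
      obtain j where j: "j \<ge> m" "j \<in> A i" using infA[of i] unfolding infinite_nat_iff_unbounded_le by blast
      have fK: "finite (K0 \<union> {j})" using Ei(2) by simp
      have eqE: "E - {j} = A i - (K0 \<union> {j})" using Ei(1) by auto
      have "j \<le> max0 (A i \<inter> (K0 \<union> {j}))"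
      proof -
        have ne: "A i \<inter> (K0 \<union> {j}) \<noteq> {}" using j by auto
        have "j \<le> Max (A i \<inter> (K0 \<union> {j}))" using j fK by (intro Max_ge) auto
        moreover have "max0 (A i \<inter> (K0 \<union> {j})) = Max (A i \<inter> (K0 \<union> {j}))"
          unfolding max0_def using ne by (simp only: if_False)
        ultimately show ?thesis by simp
      qed
      have "a \<notin> x i ` tail (max0 (A i \<inter> (K0 \<union> {j})))"
      proof
        assume "a \<in> x i ` tail (max0 (A i \<inter> (K0 \<union> {j})))"
        then obtain m' k' where mk: "(m', k') \<in> tail (max0 (A i \<inter> (K0 \<union> {j})))" "a = x i (m', k')"
          by auto
        have "(m, k) = (m', k')" using a mk(2) xinj[of i] by (simp add: inj_eq)
        moreover have "m' > j" using mk(1) \<open>j \<le> max0 _\<close> unfolding tail_def by simp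
        ultimately show False using j(1) by simp
      qed
      then have "a \<notin> rho01 A x (E - {j})" unfolding eqE rho_eq[OF ad fK] .
      then show "\<exists>K. finite K \<and> K \<subseteq> UNIV \<and> a \<notin> rho01 A x (E - K)"
        by (intro exI[of _ "{j}"]) simp
    qed
    then show "\<exists>F\<in>Abar A. F \<subseteq> E \<and>
        (\<forall>a\<in>rho01 A x F. \<exists>K. finite K \<and> K \<subseteq> UNIV \<and> a \<notin> rho01 A x (F - K))"
      using E by blast
  qed
  have PR: "partition_regular QI (UNIV :: nat set) (Abar A) (rho01 A x)"
    unfolding partition_regular_def
    using QIc QIi ne fam diff rng mono R S by simp
  have ID: "ideal_of QI (Abar A) (rho01 A x) = conv"
  proof
    show "ideal_of QI (Abar A) (rho01 A x) \<subseteq> conv"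
    proof
      fix B assume "B \<in> ideal_of QI (Abar A) (rho01 A x)"
      then have B: "B \<subseteq> QI" "\<forall>F\<in>Abar A. \<not> rho01 A x F \<subseteq> B" unfolding ideal_of_def by auto
      show "B \<in> conv"
      proof (rule ccontr)
        assume "B \<notin> conv"
        then show False using keyF[OF B(1)] B(2) by blast
      qed
    qed
  next
    show "conv \<subseteq> ideal_of QI (Abar A) (rho01 A x)"
    proof
      fix B assume B: "B \<in> conv"
      have "B \<subseteq> QI" using B unfolding conv_def by simp
      moreover have "\<not> rho01 A x F \<subseteq> B" if FA: "F \<in> Abar A" for F
        using conv_subset[OF B] rho_nc[OF FA] by blast
      ultimately show "B \<in> ideal_of QI (Abar A) (rho01 A x)" unfolding ideal_of_def by simp
    qed
  qed
  show ?thesis using PR ID by simp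
qed


end
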